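(* Let $n\ge 2$ be an integer, $C\ge 4$ a constant, $Z$ a finite set with $|Z|\ge 2$, and $T_1,T_2$ rooted $Z$-trees with $\mathrm{Seq}(T_1)=\mathrm{Seq}(T_2)$. Then at least one of the following holds: (1) there is a pair $(x,Y)$ with $x\in Z$, $\emptyset\neq Y\subset Z$, $\mathrm{lca}_{T_1}(Y)\prec\mathrm{lca}_{T_1}(Y\cup\{x\})$, $\mathrm{lca}_{T_2}(Y)\prec\mathrm{lca}_{T_2}(Y\cup\{x\})$ and $|Y|\ge |Z|/C$; (2) there is a good pair $(x,Y)$ (with respect to $n$, $T_1$, $T_2$); (3) there is a set $A\subseteq Z$ with $|A|\ge \log n$ such that the unrooted trees obtained from $T_1|A$ and $T_2|A$ by suppressing the root are identical caterpillars.
   Context: A rooted $Z$-tree is a binary rooted tree with a root of degree two, all other internal nodes of degree three, leaves bijectively labeled by $Z$, and each internal node having a designated left child and right child. $x\preceq y$ means $x$ is a descendant of $y$ ($x\prec y$ if also $x\ne y$); $\mathrm{lca}_T(W)$ is the lowest node having all elements of $W$ as descendants. For $A\subseteq Z$, $T|A$ is the rooted tree obtained from the minimal subtree spanning $A$, rooted at $\mathrm{lca}_T(A)$, by suppressing non-root degree-two nodes. $\mathrm{Seq}(T)$ is the left-to-right leaf ordering given by pre-order traversal (left child before right child). A good pair (with respect to $n$, $T_1$, $T_2$) is a pair $(x,Y)$ with $x\in Z$, $\emptyset\ne Y\subset Z$, $\mathrm{lca}_{T_1}(Y)\prec\mathrm{lca}_{T_1}(Y\cup\{x\})$, $\mathrm{lca}_{T_2}(Y)\prec\mathrm{lca}_{T_2}(Y\cup\{x\})$,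 and $|Y|\ge|Z|/(2\log n)$. A tree is a caterpillar if every internal node is adjacent to at least one leaf; unrooted trees are identical if there is a label-preserving graph isomorphism. $\log=\log_2$. *)

theory Defs
  imports Complex_Main "HOL-Library.Sublist"
begin

datatype 'a btree = Leaf 'a | Node "'a btree" "'a btree"

fun Seq :: "'a btree \<Rightarrow> 'a list" where
  "Seq (Leaf a) = [a]"
| "Seq (Node l r) = Seq l @ Seq r"

text \<open>A rooted Z-tree: root of degree two (a Node), leaves bijectively labelled by Z.\<close>
definition rooted_Ztree :: "'a set \<Rightarrow> 'a btree \<Rightarrow> bool" where
  "rooted_Ztree Z t \<longleftrightarrow> (\<exists>l r. t = Node l r) \<and> distinct (Seq t) \<and> set (Seq t) = Z"

text \<open>Nodes of a tree are identified with their positions (paths from the root;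
  False = go to left child, True = go to right child).\<close>
fun positions :: "'a btree \<Rightarrow> bool list set" where
  "positions (Leaf a) = {[]}"
| "positions (Node l r) = {[]} \<union> (Cons False) ` positions l \<union> (Cons True) ` positions r"

fun subtree_at :: "'a btree \<Rightarrow> bool list \<Rightarrow> 'a btree" where
  "subtree_at t [] = t"
| "subtree_at (Node l r) (False # p) = subtree_at l p"
| "subtree_at (Node l r) (True # p) = subtree_at r p"
| "subtree_at (Leaf a) (b # p) = Leaf a"

definition leafpos :: "'a btree \<Rightarrow> 'a \<Rightarrow> bool list" where
  "leafpos t x = (THE p. p \<in> positions t \<and> subtree_at t p = Leaf x)"

text \<open>desc t p q: node p is a descendant of node q (p \<preceq> q); sdesc: strict (p \<prec> q).\<close>
definition desc :: "'a btree \<Rightarrow> bool list \<Rightarrow> bool list \<Rightarrow> bool" where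
  "desc t p q \<longleftrightarrow> p \<in> positions t \<and> q \<in> positions t \<and> prefix q p"

definition sdesc :: "'a btree \<Rightarrow> bool list \<Rightarrow> bool list \<Rightarrow> bool" where
  "sdesc t p q \<longleftrightarrow> desc t p q \<and> p \<noteq> q"

definition lca :: "'a btree \<Rightarrow> 'a set \<Rightarrow> bool list" where
  "lca t W = (THE v. v \<in> positions t \<and> (\<forall>w\<in>W. desc t (leafpos t w) v)
      \<and> (\<forall>u. (\<forall>w\<in>W. desc t (leafpos t w) u) \<longrightarrow> desc t v u))"

text \<open>Restriction T|A: minimal subtree spanning A, rooted at lca(A), with non-root
  degree-two nodes suppressed (None iff no leaf of A occurs).\<close>
fun restrict :: "'a set \<Rightarrow> 'a btree \<Rightarrow> 'a btree option" where
  "restrict A (Leaf a) = (if a \<in> A then Some (Leaf a) else None)"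
| "restrict A (Node l r) =
     (case (restrict A l, restrict A r) of
        (None, None) \<Rightarrow> None
      | (Some l', None) \<Rightarrow> Some l'
      | (None, Some r') \<Rightarrow> Some r'
      | (Some l', Some r') \<Rightarrow> Some (Node l' r'))"

definition restr :: "'a btree \<Rightarrow> 'a set \<Rightarrow> 'a btree" where
  "restr t A = the (restrict A t)"

text \<open>The unrooted tree obtained from a rooted binary tree by suppressing the root
  (degree two): vertices are the non-root nodes, edges are the parent-child edges
  not incident to the root, plus an edge joining the two children of the root.\<close>
definition uverts :: "'a btree \<Rightarrow> bool list set" where
  "uverts t = (case t of Leaf a \<Rightarrow> {[]} | Node l r \<Rightarrow> positions t - {[]})"

definition uedges :: "'a btree \<Rightarrow> bool list set set" where
  "uedges t = (case t of Leaf a \<Rightarrow> {} | Node l r \<Rightarrow>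
      {{p, p @ [b]} | p b. p \<noteq> [] \<and> p @ [b] \<in> positions t} \<union> {{[False], [True]}})"

definition ulabel :: "'a btree \<Rightarrow> bool list \<Rightarrow> 'a option" where
  "ulabel t p = (case subtree_at t p of Leaf a \<Rightarrow> Some a | Node l r \<Rightarrow> None)"

definition ucaterpillar :: "'a btree \<Rightarrow> bool" where
  "ucaterpillar t \<longleftrightarrow> (\<forall>v\<in>uverts t. ulabel t v = None \<longrightarrow>
      (\<exists>w\<in>uverts t. {v, w} \<in> uedges t \<and> ulabel t w \<noteq> None))"

definition uidentical :: "'a btree \<Rightarrow> 'a btree \<Rightarrow> bool" where
  "uidentical t1 t2 \<longleftrightarrow> (\<exists>f. bij_betw f (uverts t1) (uverts t2)
      \<and> (\<forall>p\<in>uverts t1. \<forall>q\<in>uverts t1. {p, q} \<in> uedges t1 \<longleftrightarrow> {f p, f q} \<in> uedges t2)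
      \<and> (\<forall>p\<in>uverts t1. ulabel t2 (f p) = ulabel t1 p))"

definition good_pair :: "nat \<Rightarrow> 'a set \<Rightarrow> 'a btree \<Rightarrow> 'a btree \<Rightarrow> 'a \<Rightarrow> 'a set \<Rightarrow> bool" where
  "good_pair n Z T1 T2 x Y \<longleftrightarrow> x \<in> Z \<and> Y \<noteq> {} \<and> Y \<subset> Z
      \<and> sdesc T1 (lca T1 Y) (lca T1 (Y \<union> {x}))
      \<and> sdesc T2 (lca T2 Y) (lca T2 (Y \<union> {x}))
      \<and> real (card Y) \<ge> real (card Z) / (2 * log 2 (real n))"

end

theory Submission
  imports Defs
begin


lemma Seq_ne: "Seq t \<noteq> []"
  by (induction t) auto

lemma nil_pos[simp]: "[] \<in> positions t"
  by (cases t) auto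

lemma pos_append:
  "p \<in> positions t \<Longrightarrow> (p @ q \<in> positions t \<longleftrightarrow> q \<in> positions (subtree_at t p))
     \<and> subtree_at t (p @ q) = subtree_at (subtree_at t p) q"
proof (induction t arbitrary: p)
  case (Leaf a) then show ?case by auto
next
  case (Node l r)
  show ?case
  proof (cases p)
    case Nil then show ?thesis by simp
  next
    case (Cons b p')
    then show ?thesis using Node by (cases b) auto
  qed
qed

lemma pos_prefix_closed: "p @ q \<in> positions t \<Longrightarrow> p \<in> positions t"
proof (induction t arbitrary: p)
  case (Leaf a) then show ?case by auto
next
  case (Node l r)
  then show ?case by (cases p) auto
qed

lemma leaf_in_Seq: "p \<in> positions t \<Longrightarrow> subtree_at t p = Leaf x \<Longrightarrow> x \<in> set (Seq t)"
proof (induction t arbitrary: p)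
  case (Leaf a) then show ?case by auto
next
  case (Node l r)
  show ?case
  proof (cases p)
    case Nil then show ?thesis using Node.prems by simp
  next
    case (Cons b p')
    then show ?thesis using Node by (cases b) auto
  qed
qed

lemma leaf_exists: "x \<in> set (Seq t) \<Longrightarrow> \<exists>p. p \<in> positions t \<and> subtree_at t p = Leaf x"
proof (induction t)
  case (Leaf a) then show ?case by auto
next
  case (Node l r)
  show ?case
  proof (cases "x \<in> set (Seq l)")
    case True
    then obtain p where "p \<in> positions l \<and> subtree_at l p = Leaf x" using Node.IH(1) by blast
    then show ?thesis by (intro exI[of _ "False # p"]) auto
  next
    case False
    then have "x \<in> set (Seq r)" using Node.prems by auto
    then obtain p where "p \<in> positions r \<and> subtree_at r p = Leaf x" using Node.IH(2) by blast
    then show ?thesis by (intro exI[of _ "True # p"]) auto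
  qed
qed

lemma leaf_unique: "distinct (Seq t) \<Longrightarrow> p \<in> positions t \<Longrightarrow> subtree_at t p = Leaf x
   \<Longrightarrow> p' \<in> positions t \<Longrightarrow> subtree_at t p' = Leaf x \<Longrightarrow> p = p'"
proof (induction t arbitrary: p p')
  case (Leaf a) then show ?case by auto
next
  case (Node l r)
  have d: "distinct (Seq l)" "distinct (Seq r)" "set (Seq l) \<inter> set (Seq r) = {}" using Node.prems(1) by auto
  have c: "\<exists>q. (p = False # q \<and> q \<in> positions l \<and> subtree_at l q = Leaf x) \<or>
               (p = True # q \<and> q \<in> positions r \<and> subtree_at r q = Leaf x)" if "p \<in> positions (Node l r)" "subtree_at (Node l r) p = Leaf x" for p
    using that by auto
  obtain q where q: "(p = False # q \<and> q \<in> positions l \<and> subtree_at l q = Leaf x) \<or>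
               (p = True # q \<and> q \<in> positions r \<and> subtree_at r q = Leaf x)" using c Node.prems by blast
  obtain q' where q': "(p' = False # q' \<and> q' \<in> positions l \<and> subtree_at l q' = Leaf x) \<or>
               (p' = True # q' \<and> q' \<in> positions r \<and> subtree_at r q' = Leaf x)" using c Node.prems by blast
  show ?case
  proof (cases p)
    case Nil then show ?thesis using q by simp
  next
    case (Cons b pp)
    show ?thesis
    proof (cases b)
      case True
      then have "p = True # q" "q \<in> positions r" "subtree_at r q = Leaf x" using q Cons by auto
      moreover have "x \<in> set (Seq r)" using calculation leaf_in_Seq[of q r x] by simp
      then have "x \<notin> set (Seq l)" using d by blast
      then have "p' = True # q'" "q' \<in> positions r" "subtree_at r q' = Leaf x" using q' leaf_in_Seq[of q' _ x] by auto
      ultimately show ?thesis using Node.IH(2)[OF d(2)] by simp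
    next
      case False
      then have "p = False # q" "q \<in> positions l" "subtree_at l q = Leaf x" using q Cons by auto
      moreover have "x \<in> set (Seq l)" using calculation leaf_in_Seq[of q l x] by simp
      then have "x \<notin> set (Seq r)" using d by blast
      then have "p' = False # q'" "q' \<in> positions l" "subtree_at l q' = Leaf x" using q' leaf_in_Seq[of q' _ x] by auto
      ultimately show ?thesis using Node.IH(1)[OF d(1)] by simp
    qed
  qed
qed

lemma leafpos:
  assumes "distinct (Seq t)" "x \<in> set (Seq t)"
  shows "leafpos t x \<in> positions t \<and> subtree_at t (leafpos t x) = Leaf x"
proof -
  have "\<exists>!p. p \<in> positions t \<and> subtree_at t p = Leaf x"
    using leaf_exists[OF assms(2)] leaf_unique[OF assms(1)] by blast
  then show ?thesis unfolding leafpos_def by (rule theI')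
qed

lemma leafpos_eq:
  assumes "distinct (Seq t)" "p \<in> positions t" "subtree_at t p = Leaf x"
  shows "leafpos t x = p"
proof -
  have "leafpos t x \<in> positions t \<and> subtree_at t (leafpos t x) = Leaf x"
    using leafpos[OF assms(1) leaf_in_Seq[OF assms(2,3)]] .
  then show ?thesis using leaf_unique[OF assms(1), of "leafpos t x" x p] assms by simp
qed

lemma under_iff:
  assumes "distinct (Seq t)" "q \<in> positions t" "x \<in> set (Seq t)"
  shows "x \<in> set (Seq (subtree_at t q)) \<longleftrightarrow> prefix q (leafpos t x)"
proof
  assume "x \<in> set (Seq (subtree_at t q))"
  from leaf_exists[OF this] obtain r where r: "r \<in> positions (subtree_at t q)" "subtree_at (subtree_at t q) r = Leaf x"
    by blast
  have pa: "(q @ r \<in> positions t) = (r \<in> positions (subtree_at t q))"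
    "subtree_at t (q @ r) = subtree_at (subtree_at t q) r" using pos_append[OF assms(2), of r] by auto
  have "leafpos t x = q @ r" using leafpos_eq[OF assms(1), of "q @ r" x] pa r by simp
  then show "prefix q (leafpos t x)" by simp
next
  assume "prefix q (leafpos t x)"
  then obtain r where r: "leafpos t x = q @ r" by (auto simp: prefix_def)
  have lp: "leafpos t x \<in> positions t" "subtree_at t (leafpos t x) = Leaf x" using leafpos[OF assms(1,3)] by auto
  have pa: "(q @ r \<in> positions t) = (r \<in> positions (subtree_at t q))"
    "subtree_at t (q @ r) = subtree_at (subtree_at t q) r" using pos_append[OF assms(2), of r] by auto
  have "r \<in> positions (subtree_at t q)" "subtree_at (subtree_at t q) r = Leaf x"
    using pa lp r by auto
  then show "x \<in> set (Seq (subtree_at t q))" by (rule leaf_in_Seq)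
qed

lemma sub_Seq_subset: "q \<in> positions t \<Longrightarrow> set (Seq (subtree_at t q)) \<subseteq> set (Seq t)"
proof (induction t arbitrary: q)
  case (Leaf a) then show ?case by auto
next
  case (Node l r)
  show ?case
  proof (cases q)
    case Nil then show ?thesis by simp
  next
    case (Cons b p')
    then show ?thesis using Node by (cases b) auto
  qed
qed



lemma lca_props:
  assumes d: "distinct (Seq t)" and ne: "Y \<noteq> {}" and sub: "Y \<subseteq> set (Seq t)"
  shows "lca t Y \<in> positions t \<and> (\<forall>y\<in>Y. prefix (lca t Y) (leafpos t y))
    \<and> (\<forall>u\<in>positions t. (\<forall>y\<in>Y. prefix u (leafpos t y)) \<longrightarrow> prefix u (lca t Y))"
proof -
  obtain y0 where y0: "y0 \<in> Y" using ne by blast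
  define CP where "CP = {u \<in> positions t. \<forall>y\<in>Y. prefix u (leafpos t y)}"
  have lp: "\<And>y. y \<in> Y \<Longrightarrow> leafpos t y \<in> positions t" using leafpos[OF d] sub by blast
  have fin: "finite CP"
  proof (rule finite_subset)
    show "CP \<subseteq> set (prefixes (leafpos t y0))" using y0 unfolding CP_def by auto
  qed simp
  have "[] \<in> CP" unfolding CP_def by simp
  then have cpne: "length ` CP \<noteq> {}" by blast
  obtain v where v: "v \<in> CP" "length v = Max (length ` CP)"
    using Max_in[OF finite_imageI[OF fin] cpne] by auto
  have maxv: "\<And>u. u \<in> CP \<Longrightarrow> prefix u v"
  proof -
    fix u assume u: "u \<in> CP"
    have "length u \<le> length v" using v(2) Max_ge[OF finite_imageI[OF fin]] u by auto
    moreover have "prefix u (leafpos t y0)" "prefix v (leafpos t y0)" using u v(1) y0 unfolding CP_def by auto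
    ultimately show "prefix u v" by (rule prefix_length_prefix[rotated 2])
  qed
  have descY: "(\<forall>w\<in>Y. desc t (leafpos t w) u) \<longleftrightarrow> u \<in> CP" for u
  proof
    assume a: "\<forall>w\<in>Y. desc t (leafpos t w) u"
    then have "u \<in> positions t" using y0 unfolding desc_def by blast
    moreover have "\<forall>y\<in>Y. prefix u (leafpos t y)" using a unfolding desc_def by blast
    ultimately show "u \<in> CP" unfolding CP_def by blast
  next
    assume "u \<in> CP"
    then show "\<forall>w\<in>Y. desc t (leafpos t w) u" unfolding CP_def desc_def using lp by blast
  qed
  define P where "P = (\<lambda>v. v \<in> positions t \<and> (\<forall>w\<in>Y. desc t (leafpos t w) v)
      \<and> (\<forall>u. (\<forall>w\<in>Y. desc t (leafpos t w) u) \<longrightarrow> desc t v u))"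
  have vpos: "v \<in> positions t" using v(1) unfolding CP_def by blast
  have "\<forall>u. u \<in> CP \<longrightarrow> desc t v u" using maxv vpos unfolding desc_def CP_def by blast
  then have Pv: "P v" unfolding P_def descY using v(1) vpos by blast
  have uniq: "\<And>v'. P v' \<Longrightarrow> v' = v"
  proof -
    fix v' assume "P v'"
    then have a: "v' \<in> CP" "desc t v' v" unfolding P_def descY using v(1) by blast+
    have "prefix v' v" using maxv a(1) by blast
    moreover have "prefix v v'" using a(2) unfolding desc_def by blast
    ultimately show "v' = v" by (rule prefix_order.antisym)
  qed
  have "lca t Y = v" unfolding lca_def
    using the_equality[of P v, OF Pv uniq] unfolding P_def by simp
  then show ?thesis using v(1) maxv unfolding CP_def by blast
qed

lemma strict_from_under:
  assumes d: "distinct (Seq t)" and q: "q \<in> positions t" and ne: "Y \<noteq> {}"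
    and Ysub: "Y \<subseteq> set (Seq (subtree_at t q))"
    and x: "x \<in> set (Seq t)" "x \<notin> set (Seq (subtree_at t q))"
  shows "sdesc t (lca t Y) (lca t (Y \<union> {x}))"
proof -
  have Yt: "Y \<subseteq> set (Seq t)" using Ysub sub_Seq_subset[OF q] by blast
  note L1 = lca_props[OF d ne Yt]
  note L2 = lca_props[OF d _ , of "Y \<union> {x}"]
  have L2': "lca t (Y \<union> {x}) \<in> positions t \<and> (\<forall>y\<in>Y \<union> {x}. prefix (lca t (Y \<union> {x})) (leafpos t y))"
    using L2 Yt x by auto
  have pc: "prefix (lca t (Y \<union> {x})) (lca t Y)" using L1 L2' by auto
  have "\<forall>y\<in>Y. prefix q (leafpos t y)" using Ysub under_iff[OF d q] Yt by blast
  then have qd: "prefix q (lca t Y)" using L1 q by blast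
  have neq: "lca t Y \<noteq> lca t (Y \<union> {x})"
  proof
    assume eq: "lca t Y = lca t (Y \<union> {x})"
    then have "prefix (lca t Y) (leafpos t x)" using L2' by auto
    then have "prefix q (leafpos t x)" using qd by (meson prefix_order.trans)
    then show False using under_iff[OF d q x(1)] x(2) by simp
  qed
  show ?thesis unfolding sdesc_def desc_def using L1 L2' pc neq by auto
qed

definition pairP :: "'a set \<Rightarrow> 'a btree \<Rightarrow> 'a btree \<Rightarrow> 'a set \<Rightarrow> 'a \<Rightarrow> bool" where
  "pairP Z t1 t2 Y x \<longleftrightarrow> x \<in> Z \<and> Y \<noteq> {} \<and> Y \<subset> Z
            \<and> sdesc t1 (lca t1 Y) (lca t1 (Y \<union> {x}))
            \<and> sdesc t2 (lca t2 Y) (lca t2 (Y \<union> {x}))"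

lemma pairP_sym: "pairP Z t1 t2 Y x \<longleftrightarrow> pairP Z t2 t1 Y x"
  unfolding pairP_def by auto

lemma pair_gen:
  assumes d1: "distinct (Seq t1)" and d2: "distinct (Seq t2)"
    and Z1: "set (Seq t1) = Z" and Z2: "set (Seq t2) = Z"
    and q1: "q1 \<in> positions t1" and q2: "q2 \<in> positions t2"
    and Ysub: "set (Seq (subtree_at t1 q1)) \<subseteq> set (Seq (subtree_at t2 q2))"
    and x: "x \<in> Z" "x \<notin> set (Seq (subtree_at t2 q2))"
  shows "pairP Z t1 t2 (set (Seq (subtree_at t1 q1))) x"
proof -
  let ?Y = "set (Seq (subtree_at t1 q1))"
  have ne: "?Y \<noteq> {}" using Seq_ne by auto
  have xY: "x \<notin> ?Y" using Ysub x by blast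
  have Ysub1: "?Y \<subseteq> Z" using sub_Seq_subset[OF q1] Z1 by blast
  have x1: "x \<in> set (Seq t1)" using x Z1 by simp
  have x2: "x \<in> set (Seq t2)" using x Z2 by simp
  have s1: "sdesc t1 (lca t1 ?Y) (lca t1 (?Y \<union> {x}))"
    by (rule strict_from_under[OF d1 q1 ne order.refl x1 xY])
  have s2: "sdesc t2 (lca t2 ?Y) (lca t2 (?Y \<union> {x}))"
    by (rule strict_from_under[OF d2 q2 ne Ysub x2 x(2)])
  have ps: "?Y \<subset> Z" using Ysub1 xY x(1) by blast
  show ?thesis unfolding pairP_def using ne ps s1 s2 x(1) by blast
qed



fun subtrees :: "'a btree \<Rightarrow> 'a btree set" where
  "subtrees (Leaf a) = {Leaf a}"
| "subtrees (Node l r) = insert (Node l r) (subtrees l \<union> subtrees r)"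

lemma subtrees_self: "t \<in> subtrees t"
  by (cases t) auto

lemma subtrees_pos: "v \<in> subtrees t \<Longrightarrow> \<exists>q\<in>positions t. v = subtree_at t q"
proof (induction t)
  case (Leaf a) then show ?case by auto
next
  case (Node l r)
  show ?case
  proof (cases "v = Node l r")
    case True then show ?thesis by (intro bexI[of _ "[]"]) auto
  next
    case False
    then have "v \<in> subtrees l \<or> v \<in> subtrees r" using Node.prems by auto
    then show ?thesis
    proof
      assume "v \<in> subtrees l"
      then obtain q where "q \<in> positions l" "v = subtree_at l q" using Node.IH(1) by blast
      then show ?thesis by (intro bexI[of _ "False # q"]) auto
    next
      assume "v \<in> subtrees r"
      then obtain q where "q \<in> positions r" "v = subtree_at r q" using Node.IH(2) by blast
      then show ?thesis by (intro bexI[of _ "True # q"]) auto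
    qed
  qed
qed

lemma subtrees_sublist: "v \<in> subtrees t \<Longrightarrow> sublist (Seq v) (Seq t)"
proof (induction t)
  case (Leaf a) then show ?case by auto
next
  case (Node l r)
  have a: "sublist (Seq l) (Seq (Node l r))" "sublist (Seq r) (Seq (Node l r))" by auto
  show ?case
  proof (cases "v = Node l r")
    case True then show ?thesis by simp
  next
    case False
    then have "v \<in> subtrees l \<or> v \<in> subtrees r" using Node.prems by auto
    then show ?thesis using Node.IH a sublist_order.order.trans by blast
  qed
qed

lemma restrict_None: "restrict A t = None \<longleftrightarrow> A \<inter> set (Seq t) = {}"
proof (induction t)
  case (Leaf a) then show ?case by auto
next
  case (Node l r)
  then show ?case by (auto split: option.splits)
qed

lemma restrict_Seq: "restrict A t = Some t' \<Longrightarrow> Seq t' = filter (\<lambda>x. x \<in> A) (Seq t)"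
proof (induction t arbitrary: t')
  case (Leaf a) then show ?case by (auto split: if_splits)
next
  case (Node l r)
  show ?case
  proof (cases "restrict A l")
    case None
    then have fl: "filter (\<lambda>x. x \<in> A) (Seq l) = []" using restrict_None[of A l] by (auto simp: filter_empty_conv)
    show ?thesis
    proof (cases "restrict A r")
      case None2: None
      then show ?thesis using None Node.prems by simp
    next
      case (Some b)
      then have "t' = b" using None Node.prems by simp
      then show ?thesis using Node.IH(2)[OF Some] fl by simp
    qed
  next
    case (Some a)
    show ?thesis
    proof (cases "restrict A r")
      case None
      then have fr: "filter (\<lambda>x. x \<in> A) (Seq r) = []" using restrict_None[of A r] by (auto simp: filter_empty_conv)
      have "t' = a" using None Some Node.prems by simp
      then show ?thesis using Node.IH(1)[OF Some] fr by simp
    next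
      case Some2: (Some b)
      then have "t' = Node a b" using Some Node.prems by simp
      then show ?thesis using Node.IH(1)[OF Some] Node.IH(2)[OF Some2] by simp
    qed
  qed
qed

lemma Seq_single: assumes "Seq t = [x]" shows "t = Leaf x"
proof (cases t)
  case (Leaf a) then show ?thesis using assms by simp
next
  case (Node l r)
  have "length (Seq l) \<ge> 1" "length (Seq r) \<ge> 1" using Seq_ne[of l] Seq_ne[of r]
    by (simp_all add: Suc_leI)
  moreover have "length (Seq t) = 1" using assms by simp
  then have "length (Seq l) + length (Seq r) = 1" using Node by simp
  ultimately show ?thesis by simp
qed

lemma Seq_two: assumes "Seq t = [x, y]" shows "t = Node (Leaf x) (Leaf y)"
proof (cases t)
  case (Leaf a)
  then show ?thesis using assms by simp
next
  case (Node l r)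
  have e: "Seq l @ Seq r = [x, y]" using assms Node by simp
  have "length (Seq l) \<ge> 1" "length (Seq r) \<ge> 1" using Seq_ne[of l] Seq_ne[of r]
    by (simp_all add: Suc_leI)
  moreover have "length (Seq l) + length (Seq r) = 2" using arg_cong[OF e, of length] by simp
  ultimately have "length (Seq l) = 1" by simp
  then obtain a where a: "Seq l = [a]" by (cases "Seq l") auto
  then have sl: "Seq l = [x]" and sr: "Seq r = [y]" using e by simp_all
  have "l = Leaf x" "r = Leaf y" using Seq_single[OF sl] Seq_single[OF sr] by auto
  then show ?thesis using Node by simp
qed

definition pc :: "('a \<Rightarrow> bool) \<Rightarrow> 'a list \<Rightarrow> bool" where
  "pc P w \<longleftrightarrow> (\<exists>w1 w2. w = w1 @ w2 \<and> (\<forall>x\<in>set w1. P x) \<and> (\<forall>x\<in>set w2. \<not> P x))"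

lemma pc_app:
  assumes "pc P (u @ v)"
  shows "pc P u" "pc P v" "(\<exists>x\<in>set v. P x) \<Longrightarrow> (\<forall>x\<in>set u. P x)"
proof -
  obtain w1 w2 where w: "u @ v = w1 @ w2" "\<forall>x\<in>set w1. P x" "\<forall>x\<in>set w2. \<not> P x"
    using assms unfolding pc_def by blast
  obtain us where us: "(u = w1 @ us \<and> us @ v = w2) \<or> (u @ us = w1 \<and> v = us @ w2)"
    using w(1) by (auto simp: append_eq_append_conv2)
  have "pc P u \<and> pc P v \<and> ((\<exists>x\<in>set v. P x) \<longrightarrow> (\<forall>x\<in>set u. P x))"
  proof (cases "u = w1 @ us \<and> us @ v = w2")
    case True
    have a: "\<forall>x\<in>set us. \<not> P x" "\<forall>x\<in>set v. \<not> P x" using True w(3) by auto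
    have "pc P u" unfolding pc_def using True w(2) a(1) by blast
    moreover have "pc P v" unfolding pc_def using a(2) by (intro exI[of _ "[]"] exI[of _ v]) simp
    ultimately show ?thesis using a(2) by blast
  next
    case False
    then have F: "u @ us = w1 \<and> v = us @ w2" using us by blast
    have a: "\<forall>x\<in>set u. P x" "\<forall>x\<in>set us. P x" using F w(2) by auto
    have "pc P u" unfolding pc_def using a(1) by (intro exI[of _ u] exI[of _ "[]"]) simp
    moreover have "pc P v" unfolding pc_def using F a(2) w(3) by blast
    ultimately show ?thesis using a(1) by blast
  qed
  then show "pc P u" "pc P v" "(\<exists>x\<in>set v. P x) \<Longrightarrow> (\<forall>x\<in>set u. P x)" by blast+
qed

lemma distinct_card_le1:
  assumes "distinct xs" "card (set xs) \<le> 1" "xs \<noteq> []"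
  shows "\<exists>z. xs = [z]"
proof -
  have "length xs \<le> 1" using assms distinct_card by metis
  then show ?thesis using assms(3) by (cases xs) auto
qed

fun rc :: "'a list \<Rightarrow> 'a btree" where
  "rc [] = Leaf undefined"
| "rc [x] = Leaf x"
| "rc (x # y # ys) = Node (Leaf x) (rc (y # ys))"

fun lc :: "'a list \<Rightarrow> 'a btree" where
  "lc [] = Leaf undefined"
| "lc [x] = Leaf x"
| "lc (x # y # ys) = Node (lc (y # ys)) (Leaf x)"

definition lcomb :: "'a list \<Rightarrow> 'a btree" where
  "lcomb xs = lc (rev xs)"

lemma lcomb_single[simp]: "lcomb [z] = Leaf z"
  by (simp add: lcomb_def)

lemma lcomb_snoc: "xs \<noteq> [] \<Longrightarrow> lcomb (xs @ [z]) = Node (lcomb xs) (Leaf z)"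
  unfolding lcomb_def by (cases "rev xs") auto

lemma rc_cons: "ys \<noteq> [] \<Longrightarrow> rc (x # ys) = Node (Leaf x) (rc ys)"
  by (cases ys) auto

lemma restrict_single:
  assumes "distinct (Seq u)" "A \<inter> set (Seq u) \<noteq> {}" "card (A \<inter> set (Seq u)) \<le> 1"
  shows "\<exists>z. filter (\<lambda>x. x \<in> A) (Seq u) = [z] \<and> restrict A u = Some (Leaf z)"
proof -
  let ?f = "filter (\<lambda>x. x \<in> A) (Seq u)"
  have sf: "set ?f = A \<inter> set (Seq u)" by auto
  have df: "distinct ?f" using assms(1) by simp
  have nf: "?f \<noteq> []" using assms(2) sf by (metis set_empty)
  have cf: "card (set ?f) \<le> 1" using sf assms(3) by simp
  obtain z where z: "?f = [z]" using distinct_card_le1[OF df cf nf] by blast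
  obtain t' where t': "restrict A u = Some t'" using assms(2) restrict_None[of A u] by (cases "restrict A u") auto
  have st: "Seq t' = [z]" using restrict_Seq[OF t'] z by simp
  have "t' = Leaf z" using Seq_single[OF st] .
  then show ?thesis using z t' by blast
qed

lemma combR:
  assumes "distinct (Seq u)" "pc P (Seq u)"
    "\<forall>v\<in>subtrees u. k \<le> card (set (Seq v)) \<longrightarrow> (\<exists>x\<in>set (Seq v). P x) \<and> (\<exists>x\<in>set (Seq v). \<not> P x)"
    "\<forall>v\<in>subtrees u. card (set (Seq v)) < k \<longrightarrow> card (A \<inter> set (Seq v)) \<le> 1"
    "\<forall>x\<in>A. P x" "A \<inter> set (Seq u) \<noteq> {}"
  shows "restrict A u = Some (rc (filter (\<lambda>x. x \<in> A) (Seq u)))"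
  using assms
proof (induction u)
  case (Leaf a)
  then show ?case by auto
next
  case (Node l r)
  let ?u = "Node l r"
  show ?case
  proof (cases "card (set (Seq ?u)) < k")
    case True
    then have "card (A \<inter> set (Seq ?u)) \<le> 1" using Node.prems(4) subtrees_self by blast
    then obtain z where z: "filter (\<lambda>x. x \<in> A) (Seq ?u) = [z]" "restrict A ?u = Some (Leaf z)"
      using restrict_single[OF Node.prems(1) Node.prems(6)] by blast
    then show ?thesis by (simp only: z rc.simps(2) lcomb_single)
  next
    case False
    have dl: "distinct (Seq l)" and dr: "distinct (Seq r)" using Node.prems(1) by auto
    have pclr: "pc P (Seq l @ Seq r)" using Node.prems(2) by simp
    have pcl: "pc P (Seq l)" and pcr: "pc P (Seq r)" using pc_app(1,2)[OF pclr] by auto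
    have sl: "\<forall>v\<in>subtrees l. k \<le> card (set (Seq v)) \<longrightarrow> (\<exists>x\<in>set (Seq v). P x) \<and> (\<exists>x\<in>set (Seq v). \<not> P x)"
      "\<forall>v\<in>subtrees l. card (set (Seq v)) < k \<longrightarrow> card (A \<inter> set (Seq v)) \<le> 1"
      using Node.prems(3,4) by simp_all
    have sr: "\<forall>v\<in>subtrees r. k \<le> card (set (Seq v)) \<longrightarrow> (\<exists>x\<in>set (Seq v). P x) \<and> (\<exists>x\<in>set (Seq v). \<not> P x)"
      "\<forall>v\<in>subtrees r. card (set (Seq v)) < k \<longrightarrow> card (A \<inter> set (Seq v)) \<le> 1"
      using Node.prems(3,4) by simp_all
    show ?thesis
    proof (cases "\<exists>x\<in>set (Seq l). \<not> P x")
      case True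
      then have "\<forall>x\<in>set (Seq r). \<not> P x" using pc_app(3)[OF pclr] by blast
      then have Ar: "A \<inter> set (Seq r) = {}" using Node.prems(5) by blast
      then have Al: "A \<inter> set (Seq l) \<noteq> {}" using Node.prems(6) by auto
      have IH: "restrict A l = Some (rc (filter (\<lambda>x. x \<in> A) (Seq l)))"
        using Node.IH(1)[OF dl pcl sl Node.prems(5) Al] .
      have "filter (\<lambda>x. x \<in> A) (Seq r) = []" using Ar by (auto simp: filter_empty_conv)
      moreover have "restrict A r = None" using Ar restrict_None by blast
      ultimately show ?thesis using IH by simp
    next
      case False
      have "l \<in> subtrees ?u" using subtrees_self[of l] by simp
      then have "card (set (Seq l)) < k" using Node.prems(3) False by (meson not_le)
      then have cl: "card (A \<inter> set (Seq l)) \<le> 1" using sl(2) subtrees_self by blast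
      show ?thesis
      proof (cases "A \<inter> set (Seq l) = {}")
        case True
        then have Ar: "A \<inter> set (Seq r) \<noteq> {}" using Node.prems(6) by auto
        have IH: "restrict A r = Some (rc (filter (\<lambda>x. x \<in> A) (Seq r)))"
          using Node.IH(2)[OF dr pcr sr Node.prems(5) Ar] .
        have "filter (\<lambda>x. x \<in> A) (Seq l) = []" using True by (auto simp: filter_empty_conv)
        moreover have "restrict A l = None" using True restrict_None by blast
        ultimately show ?thesis using IH by simp
      next
        case Al: False
        obtain z where z: "filter (\<lambda>x. x \<in> A) (Seq l) = [z]" "restrict A l = Some (Leaf z)"
          using restrict_single[OF dl Al cl] by blast
        show ?thesis
        proof (cases "A \<inter> set (Seq r) = {}")
          case True
          have "filter (\<lambda>x. x \<in> A) (Seq r) = []" using True by (auto simp: filter_empty_conv)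
          moreover have "restrict A r = None" using True restrict_None by blast
          ultimately show ?thesis using z by simp
        next
          case Ar: False
          have IH: "restrict A r = Some (rc (filter (\<lambda>x. x \<in> A) (Seq r)))"
            using Node.IH(2)[OF dr pcr sr Node.prems(5) Ar] .
          have ne: "filter (\<lambda>x. x \<in> A) (Seq r) \<noteq> []" using Ar by (auto simp: filter_empty_conv)
          show ?thesis using IH z rc_cons[OF ne] by simp
        qed
      qed
    qed
  qed
qed

lemma combL:
  assumes "distinct (Seq u)" "pc P (Seq u)"
    "\<forall>v\<in>subtrees u. k \<le> card (set (Seq v)) \<longrightarrow> (\<exists>x\<in>set (Seq v). P x) \<and> (\<exists>x\<in>set (Seq v). \<not> P x)"
    "\<forall>v\<in>subtrees u. card (set (Seq v)) < k \<longrightarrow> card (A \<inter> set (Seq v)) \<le> 1"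
    "\<forall>x\<in>A. \<not> P x" "A \<inter> set (Seq u) \<noteq> {}"
  shows "restrict A u = Some (lcomb (filter (\<lambda>x. x \<in> A) (Seq u)))"
  using assms
proof (induction u)
  case (Leaf a)
  then show ?case by auto
next
  case (Node l r)
  let ?u = "Node l r"
  show ?case
  proof (cases "card (set (Seq ?u)) < k")
    case True
    then have "card (A \<inter> set (Seq ?u)) \<le> 1" using Node.prems(4) subtrees_self by blast
    then obtain z where z: "filter (\<lambda>x. x \<in> A) (Seq ?u) = [z]" "restrict A ?u = Some (Leaf z)"
      using restrict_single[OF Node.prems(1) Node.prems(6)] by blast
    then show ?thesis by (simp only: z rc.simps(2) lcomb_single)
  next
    case False
    have dl: "distinct (Seq l)" and dr: "distinct (Seq r)" using Node.prems(1) by auto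
    have pclr: "pc P (Seq l @ Seq r)" using Node.prems(2) by simp
    have pcl: "pc P (Seq l)" and pcr: "pc P (Seq r)" using pc_app(1,2)[OF pclr] by auto
    have sl: "\<forall>v\<in>subtrees l. k \<le> card (set (Seq v)) \<longrightarrow> (\<exists>x\<in>set (Seq v). P x) \<and> (\<exists>x\<in>set (Seq v). \<not> P x)"
      "\<forall>v\<in>subtrees l. card (set (Seq v)) < k \<longrightarrow> card (A \<inter> set (Seq v)) \<le> 1"
      using Node.prems(3,4) by simp_all
    have sr: "\<forall>v\<in>subtrees r. k \<le> card (set (Seq v)) \<longrightarrow> (\<exists>x\<in>set (Seq v). P x) \<and> (\<exists>x\<in>set (Seq v). \<not> P x)"
      "\<forall>v\<in>subtrees r. card (set (Seq v)) < k \<longrightarrow> card (A \<inter> set (Seq v)) \<le> 1"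
      using Node.prems(3,4) by simp_all
    show ?thesis
    proof (cases "\<exists>x\<in>set (Seq r). P x")
      case True
      then have "\<forall>x\<in>set (Seq l). P x" using pc_app(3)[OF pclr] by blast
      then have Al: "A \<inter> set (Seq l) = {}" using Node.prems(5) by blast
      then have Ar: "A \<inter> set (Seq r) \<noteq> {}" using Node.prems(6) by auto
      have IH: "restrict A r = Some (lcomb (filter (\<lambda>x. x \<in> A) (Seq r)))"
        using Node.IH(2)[OF dr pcr sr Node.prems(5) Ar] .
      have "filter (\<lambda>x. x \<in> A) (Seq l) = []" using Al by (auto simp: filter_empty_conv)
      moreover have "restrict A l = None" using Al restrict_None by blast
      ultimately show ?thesis using IH by simp
    next
      case False
      have "r \<in> subtrees ?u" using subtrees_self[of r] by simp
      then have "card (set (Seq r)) < k" using Node.prems(3) False by (meson not_le)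
      then have cr: "card (A \<inter> set (Seq r)) \<le> 1" using sr(2) subtrees_self by blast
      show ?thesis
      proof (cases "A \<inter> set (Seq r) = {}")
        case True
        then have Al: "A \<inter> set (Seq l) \<noteq> {}" using Node.prems(6) by auto
        have IH: "restrict A l = Some (lcomb (filter (\<lambda>x. x \<in> A) (Seq l)))"
          using Node.IH(1)[OF dl pcl sl Node.prems(5) Al] .
        have "filter (\<lambda>x. x \<in> A) (Seq r) = []" using True by (auto simp: filter_empty_conv)
        moreover have "restrict A r = None" using True restrict_None by blast
        ultimately show ?thesis using IH by simp
      next
        case Ar: False
        obtain z where z: "filter (\<lambda>x. x \<in> A) (Seq r) = [z]" "restrict A r = Some (Leaf z)"
          using restrict_single[OF dr Ar cr] by blast
        show ?thesis
        proof (cases "A \<inter> set (Seq l) = {}")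
          case True
          have "filter (\<lambda>x. x \<in> A) (Seq l) = []" using True by (auto simp: filter_empty_conv)
          moreover have "restrict A l = None" using True restrict_None by blast
          ultimately show ?thesis using z by simp
        next
          case Al: False
          have IH: "restrict A l = Some (lcomb (filter (\<lambda>x. x \<in> A) (Seq l)))"
            using Node.IH(1)[OF dl pcl sl Node.prems(5) Al] .
          have ne: "filter (\<lambda>x. x \<in> A) (Seq l) \<noteq> []" using Al by (auto simp: filter_empty_conv)
          show ?thesis using IH z lcomb_snoc[OF ne, of z] by simp
        qed
      qed
    qed
  qed
qed



lemma positions_Cons[simp]:
  "(b # p \<in> positions (Node l r)) = (if b then p \<in> positions r else p \<in> positions l)"
  by auto

lemma positions_Cons_Leaf[simp]: "b # p \<notin> positions (Leaf a)"
  by simp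

lemma uverts_Node[simp]: "uverts (Node l r) = positions (Node l r) - {[]}"
  by (simp add: uverts_def)

lemma uedge_intro:
  assumes "q = p @ [b]" "p \<noteq> []" "q \<in> positions (Node l r)"
  shows "{p, q} \<in> uedges (Node l r)"
  using assms unfolding uedges_def by auto

lemma uedge_root: "{[False], [True]} \<in> uedges (Node l r)" "{[True], [False]} \<in> uedges (Node l r)"
  unfolding uedges_def by auto

lemma uedges_cases:
  assumes "e \<in> uedges (Node l r)"
  obtains p b where "e = {p, p @ [b]}" "p \<noteq> []" "p @ [b] \<in> positions (Node l r)"
  | "e = {[False], [True]}"
  using assms unfolding uedges_def by auto

lemma uid_intro:
  assumes "\<forall>p\<in>uverts t1. f p \<in> uverts t2" "\<forall>p\<in>uverts t2. g p \<in> uverts t1"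
    "\<forall>p\<in>uverts t1. g (f p) = p" "\<forall>p\<in>uverts t2. f (g p) = p"
    "\<forall>p\<in>uverts t1. \<forall>q\<in>uverts t1. {p, q} \<in> uedges t1 \<longrightarrow> {f p, f q} \<in> uedges t2"
    "\<forall>p\<in>uverts t2. \<forall>q\<in>uverts t2. {p, q} \<in> uedges t2 \<longrightarrow> {g p, g q} \<in> uedges t1"
    "\<forall>p\<in>uverts t1. ulabel t2 (f p) = ulabel t1 p"
  shows "uidentical t1 t2"
proof -
  have bij: "bij_betw f (uverts t1) (uverts t2)"
    by (rule bij_betw_byWitness[of _ g]) (use assms(1-4) in auto)
  have iff: "\<forall>p\<in>uverts t1. \<forall>q\<in>uverts t1. {p, q} \<in> uedges t1 \<longleftrightarrow> {f p, f q} \<in> uedges t2"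
  proof (intro ballI iffI)
    fix p q assume "p \<in> uverts t1" "q \<in> uverts t1" "{p, q} \<in> uedges t1"
    then show "{f p, f q} \<in> uedges t2" using assms(5) by blast
  next
    fix p q assume pq: "p \<in> uverts t1" "q \<in> uverts t1" and e: "{f p, f q} \<in> uedges t2"
    have "f p \<in> uverts t2" "f q \<in> uverts t2" using pq assms(1) by blast+
    then have "{g (f p), g (f q)} \<in> uedges t1" using assms(6) e by blast
    then show "{p, q} \<in> uedges t1" using pq assms(3) by simp
  qed
  show ?thesis unfolding uidentical_def using bij iff assms(7) by blast
qed

lemma uid_refl: "uidentical t t"
  by (rule uid_intro[of t id t id]) auto

lemma uid_sym:
  assumes "uidentical t1 t2" shows "uidentical t2 t1"
proof -
  obtain f where f: "bij_betw f (uverts t1) (uverts t2)"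
    "\<forall>p\<in>uverts t1. \<forall>q\<in>uverts t1. {p, q} \<in> uedges t1 \<longleftrightarrow> {f p, f q} \<in> uedges t2"
    "\<forall>p\<in>uverts t1. ulabel t2 (f p) = ulabel t1 p"
    using assms unfolding uidentical_def by blast
  define g where "g = inv_into (uverts t1) f"
  have g1: "\<forall>p\<in>uverts t2. g p \<in> uverts t1" unfolding g_def
    using f(1) by (metis bij_betw_def inv_into_into)
  have g2: "\<forall>p\<in>uverts t2. f (g p) = p" unfolding g_def
    using f(1) by (meson bij_betw_inv_into_right)
  have g3: "\<forall>p\<in>uverts t1. g (f p) = p" unfolding g_def
    using f(1) by (meson bij_betw_inv_into_left)
  have f1: "\<forall>p\<in>uverts t1. f p \<in> uverts t2" using f(1) by (meson bij_betwE)
  show ?thesis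
  proof (rule uid_intro[of t2 g t1 f])
    show "\<forall>p\<in>uverts t2. \<forall>q\<in>uverts t2. {p, q} \<in> uedges t2 \<longrightarrow> {g p, g q} \<in> uedges t1"
    proof (intro ballI impI)
      fix p q assume pq: "p \<in> uverts t2" "q \<in> uverts t2" "{p, q} \<in> uedges t2"
      have "{f (g p), f (g q)} \<in> uedges t2" using pq g2 by simp
      then show "{g p, g q} \<in> uedges t1" using f(2) g1 pq by blast
    qed
    show "\<forall>p\<in>uverts t1. \<forall>q\<in>uverts t1. {p, q} \<in> uedges t1 \<longrightarrow> {f p, f q} \<in> uedges t2"
      using f(2) by blast
    show "\<forall>p\<in>uverts t2. ulabel t1 (g p) = ulabel t2 p"
      using f(3) g1 g2 by metis
  qed (use g1 g2 g3 f1 in auto)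
qed

lemma uid_trans:
  assumes "uidentical t1 t2" "uidentical t2 t3" shows "uidentical t1 t3"
proof -
  obtain f where f: "bij_betw f (uverts t1) (uverts t2)"
    "\<forall>p\<in>uverts t1. \<forall>q\<in>uverts t1. {p, q} \<in> uedges t1 \<longleftrightarrow> {f p, f q} \<in> uedges t2"
    "\<forall>p\<in>uverts t1. ulabel t2 (f p) = ulabel t1 p"
    using assms(1) unfolding uidentical_def by blast
  obtain h where h: "bij_betw h (uverts t2) (uverts t3)"
    "\<forall>p\<in>uverts t2. \<forall>q\<in>uverts t2. {p, q} \<in> uedges t2 \<longleftrightarrow> {h p, h q} \<in> uedges t3"
    "\<forall>p\<in>uverts t2. ulabel t3 (h p) = ulabel t2 p"
    using assms(2) unfolding uidentical_def by blast
  have f1: "\<forall>p\<in>uverts t1. f p \<in> uverts t2" using f(1) by (meson bij_betwE)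
  have b: "bij_betw (h \<circ> f) (uverts t1) (uverts t3)" using f(1) h(1) by (rule bij_betw_trans)
  have e: "\<forall>p\<in>uverts t1. \<forall>q\<in>uverts t1. {p, q} \<in> uedges t1 \<longleftrightarrow> {(h \<circ> f) p, (h \<circ> f) q} \<in> uedges t3"
    using f(2) h(2) f1 by simp
  have l: "\<forall>p\<in>uverts t1. ulabel t3 ((h \<circ> f) p) = ulabel t1 p" using f(3) h(3) f1 by simp
  show ?thesis unfolding uidentical_def using b e l by blast
qed

lemma cat_inv:
  assumes "uidentical t1 t2" "ucaterpillar t1" shows "ucaterpillar t2"
proof -
  obtain f where f: "bij_betw f (uverts t1) (uverts t2)"
    "\<forall>p\<in>uverts t1. \<forall>q\<in>uverts t1. {p, q} \<in> uedges t1 \<longleftrightarrow> {f p, f q} \<in> uedges t2"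
    "\<forall>p\<in>uverts t1. ulabel t2 (f p) = ulabel t1 p"
    using assms(1) unfolding uidentical_def by blast
  show ?thesis unfolding ucaterpillar_def
  proof (intro ballI impI)
    fix v assume v: "v \<in> uverts t2" "ulabel t2 v = None"
    obtain u where u: "u \<in> uverts t1" "v = f u" using v(1) f(1) by (metis bij_betw_def imageE)
    have "ulabel t1 u = None" using f(3) u v(2) by metis
    then obtain w where w: "w \<in> uverts t1" "{u, w} \<in> uedges t1" "ulabel t1 w \<noteq> None"
      using assms(2) u(1) unfolding ucaterpillar_def by blast
    have "f w \<in> uverts t2" using w(1) f(1) by (meson bij_betwE)
    moreover have "{v, f w} \<in> uedges t2" using f(2) u w by blast
    moreover have "ulabel t2 (f w) \<noteq> None" using f(3) w by metis
    ultimately show "\<exists>w\<in>uverts t2. {v, w} \<in> uedges t2 \<and> ulabel t2 w \<noteq> None" by blast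
  qed
qed



fun rotf :: "bool list \<Rightarrow> bool list" where
  "rotf (False # False # r) = False # r"
| "rotf (False # True # r) = True # False # r"
| "rotf [False] = [True]"
| "rotf (True # r) = True # True # r"
| "rotf [] = []"

fun rotg :: "bool list \<Rightarrow> bool list" where
  "rotg (False # r) = False # False # r"
| "rotg [True] = [False]"
| "rotg (True # False # r) = False # True # r"
| "rotg (True # True # r) = True # r"
| "rotg [] = []"

lemma blist_cases:
  obtains "p = []" | "p = [False]" | "p = [True]" | r where "p = False # False # r"
  | r where "p = False # True # r" | r where "p = True # False # r" | r where "p = True # True # r"
proof (cases p)
  case Nil then show ?thesis using that by blast
next
  case (Cons b r)
  show ?thesis
  proof (cases r)
    case Nil then show ?thesis using that Cons by (cases b) auto
  next
    case (Cons c s)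
    then show ?thesis using that \<open>p = b # r\<close> by (cases b; cases c) auto
  qed
qed

lemma rot_gf: "p \<noteq> [] \<Longrightarrow> rotg (rotf p) = p"
  by (cases p rule: blist_cases) auto

lemma rot_fg: "p \<noteq> [] \<Longrightarrow> rotf (rotg p) = p"
  by (cases p rule: blist_cases) auto

lemma rot_f_vert: "p \<in> uverts (Node (Node a b) c) \<Longrightarrow> rotf p \<in> uverts (Node a (Node b c))"
  by (cases p rule: blist_cases) auto

lemma rot_g_vert: "p \<in> uverts (Node a (Node b c)) \<Longrightarrow> rotg p \<in> uverts (Node (Node a b) c)"
  by (cases p rule: blist_cases) auto

lemma rot_f_lab: "p \<in> uverts (Node (Node a b) c) \<Longrightarrow> ulabel (Node a (Node b c)) (rotf p) = ulabel (Node (Node a b) c) p"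
  by (cases p rule: blist_cases) (auto simp: ulabel_def)

lemma rot_f_edge:
  assumes "p \<noteq> []" "p @ [\<beta>] \<in> positions (Node (Node a b) c)"
  shows "{rotf p, rotf (p @ [\<beta>])} \<in> uedges (Node a (Node b c))"
  using assms
proof (cases p rule: blist_cases)
  case 2
  then show ?thesis
  proof (cases \<beta>)
    case True then show ?thesis using 2 by (auto intro!: uedge_intro[of _ "[True]" False])
  next
    case False then show ?thesis using 2 by (simp add: uedge_root)
  qed
next
  case 3 then show ?thesis using assms by (auto intro!: uedge_intro)
next
  case (4 r) then show ?thesis using assms by (auto intro!: uedge_intro[of _ "False # r" \<beta>])
next
  case (5 r) then show ?thesis using assms by (auto intro!: uedge_intro[of _ "True # False # r" \<beta>])
next
  case (6 r) then show ?thesis using assms by (auto intro!: uedge_intro[of _ "True # True # False # r" \<beta>])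
next
  case (7 r) then show ?thesis using assms by (auto intro!: uedge_intro[of _ "True # True # True # r" \<beta>])
qed (use assms in auto)

lemma rot_g_edge:
  assumes "p \<noteq> []" "p @ [\<beta>] \<in> positions (Node a (Node b c))"
  shows "{rotg p, rotg (p @ [\<beta>])} \<in> uedges (Node (Node a b) c)"
  using assms
proof (cases p rule: blist_cases)
  case 3
  then show ?thesis
  proof (cases \<beta>)
    case True then show ?thesis using 3 by (simp add: uedge_root)
  next
    case False then show ?thesis using 3 by (auto intro!: uedge_intro[of _ "[False]" True])
  qed
next
  case 2 then show ?thesis using assms by (auto intro!: uedge_intro[of _ "[False, False]" \<beta>])
next
  case (4 r) then show ?thesis using assms by (auto intro!: uedge_intro[of _ "False # False # False # r" \<beta>])
next
  case (5 r) then show ?thesis using assms by (auto intro!: uedge_intro[of _ "False # False # True # r" \<beta>])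
next
  case (6 r) then show ?thesis using assms by (auto intro!: uedge_intro[of _ "False # True # r" \<beta>])
next
  case (7 r) then show ?thesis using assms by (auto intro!: uedge_intro[of _ "True # r" \<beta>])
qed (use assms in auto)



lemma uid_rot: "uidentical (Node (Node a b) c) (Node a (Node b c))"
proof (rule uid_intro[of _ rotf _ rotg])
  let ?t1 = "Node (Node a b) c" and ?t2 = "Node a (Node b c)"
  show "\<forall>p\<in>uverts ?t1. rotf p \<in> uverts ?t2" using rot_f_vert by blast
  show "\<forall>p\<in>uverts ?t2. rotg p \<in> uverts ?t1" using rot_g_vert by blast
  show "\<forall>p\<in>uverts ?t1. rotg (rotf p) = p" using rot_gf by simp
  show "\<forall>p\<in>uverts ?t2. rotf (rotg p) = p" using rot_fg by simp
  show "\<forall>p\<in>uverts ?t1. ulabel ?t2 (rotf p) = ulabel ?t1 p" using rot_f_lab by blast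
  show "\<forall>p\<in>uverts ?t1. \<forall>q\<in>uverts ?t1. {p, q} \<in> uedges ?t1 \<longrightarrow> {rotf p, rotf q} \<in> uedges ?t2"
  proof (intro ballI impI)
    fix p q assume "{p, q} \<in> uedges ?t1"
    then show "{rotf p, rotf q} \<in> uedges ?t2"
    proof (cases rule: uedges_cases)
      case (1 p0 \<beta>)
      have "{rotf p, rotf q} = rotf ` {p, q}" by simp
      also have "\<dots> = {rotf p0, rotf (p0 @ [\<beta>])}" using 1(1) by simp
      finally show ?thesis using rot_f_edge[OF 1(2,3)] by simp
    next
      case 2
      have "{rotf p, rotf q} = rotf ` {p, q}" by simp
      also have "\<dots> = {[True], [True] @ [True]}" using 2 by simp
      finally show ?thesis by (simp only:) (rule uedge_intro, auto)
    qed
  qed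
  show "\<forall>p\<in>uverts ?t2. \<forall>q\<in>uverts ?t2. {p, q} \<in> uedges ?t2 \<longrightarrow> {rotg p, rotg q} \<in> uedges ?t1"
  proof (intro ballI impI)
    fix p q assume "{p, q} \<in> uedges ?t2"
    then show "{rotg p, rotg q} \<in> uedges ?t1"
    proof (cases rule: uedges_cases)
      case (1 p0 \<beta>)
      have "{rotg p, rotg q} = rotg ` {p, q}" by simp
      also have "\<dots> = {rotg p0, rotg (p0 @ [\<beta>])}" using 1(1) by simp
      finally show ?thesis using rot_g_edge[OF 1(2,3)] by simp
    next
      case 2
      have "{rotg p, rotg q} = rotg ` {p, q}" by simp
      also have "\<dots> = {[False], [False] @ [False]}" using 2 by auto
      finally show ?thesis by (simp only:) (rule uedge_intro, auto)
    qed
  qed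
qed

fun racc :: "'a list \<Rightarrow> 'a btree \<Rightarrow> 'a btree" where
  "racc [] R = R"
| "racc (x # xs) R = Node (Leaf x) (racc xs R)"

lemma racc_snoc: "racc (ys @ [y]) R = racc ys (Node (Leaf y) R)"
  by (induction ys) auto

lemma rc_snoc: "rc (ys @ [z]) = racc ys (Leaf z)"
proof (induction ys)
  case Nil then show ?case by simp
next
  case (Cons y ys)
  have "rc (y # (ys @ [z])) = Node (Leaf y) (rc (ys @ [z]))" by (rule rc_cons) simp
  then show ?case using Cons by simp
qed

lemma lcomb_racc: "xs \<noteq> [] \<Longrightarrow> uidentical (Node (lcomb xs) R) (racc xs R)"
proof (induction xs arbitrary: R rule: rev_induct)
  case Nil then show ?case by simp
next
  case (snoc y ys)
  show ?case
  proof (cases "ys = []")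
    case True then show ?thesis by (simp add: uid_refl)
  next
    case False
    have "Node (lcomb (ys @ [y])) R = Node (Node (lcomb ys) (Leaf y)) R" using lcomb_snoc[OF False] by simp
    moreover have "uidentical (Node (Node (lcomb ys) (Leaf y)) R) (Node (lcomb ys) (Node (Leaf y) R))"
      by (rule uid_rot)
    moreover have "uidentical (Node (lcomb ys) (Node (Leaf y) R)) (racc ys (Node (Leaf y) R))"
      using snoc.IH[OF False] .
    ultimately have "uidentical (Node (lcomb (ys @ [y])) R) (racc ys (Node (Leaf y) R))"
      using uid_trans by metis
    then show ?thesis by (simp add: racc_snoc)
  qed
qed

lemma lcomb_rc: "xs \<noteq> [] \<Longrightarrow> uidentical (lcomb xs) (rc xs)"
proof (induction xs rule: rev_induct)
  case Nil then show ?case by simp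
next
  case (snoc z ys)
  show ?case
  proof (cases "ys = []")
    case True then show ?thesis by (simp add: uid_refl)
  next
    case False
    have "lcomb (ys @ [z]) = Node (lcomb ys) (Leaf z)" using lcomb_snoc[OF False] by simp
    then show ?thesis using lcomb_racc[OF False, of "Leaf z"] by (simp add: rc_snoc)
  qed
qed

fun LL :: "'a btree \<Rightarrow> bool" where
  "LL (Leaf a) = True"
| "LL (Node l r) = ((\<exists>a. l = Leaf a) \<and> LL r)"

lemma LL_rc: "LL (rc xs)"
  by (induction xs rule: rc.induct) auto

lemma LL_sub: "LL t \<Longrightarrow> p \<in> positions t \<Longrightarrow> subtree_at t p = Node l r \<Longrightarrow> \<exists>a. l = Leaf a"
proof (induction t arbitrary: p)
  case (Leaf x) then show ?case by auto
next
  case (Node l' r')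
  show ?case
  proof (cases p)
    case Nil then show ?thesis using Node.prems by auto
  next
    case (Cons b q)
    show ?thesis
    proof (cases b)
      case True then show ?thesis using Node Cons by auto
    next
      case False
      then have "q \<in> positions l'" "subtree_at l' q = Node l r" using Node.prems Cons by auto
      moreover obtain a where "l' = Leaf a" using Node.prems by auto
      ultimately show ?thesis by auto
    qed
  qed
qed

lemma cat_LL: assumes "LL t" shows "ucaterpillar t"
proof (cases t)
  case (Leaf a) then show ?thesis unfolding ucaterpillar_def uverts_def ulabel_def by simp
next
  case (Node l0 r0)
  show ?thesis unfolding ucaterpillar_def
  proof (intro ballI impI)
    fix v assume v: "v \<in> uverts t" "ulabel t v = None"
    then have vp: "v \<in> positions t" "v \<noteq> []" using Node by simp_all
    obtain l r where lr: "subtree_at t v = Node l r" using v(2) unfolding ulabel_def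
      by (cases "subtree_at t v") auto
    obtain a where a: "l = Leaf a" using LL_sub[OF assms vp(1) lr] by blast
    have pa: "(v @ [False] \<in> positions t) = ([False] \<in> positions (subtree_at t v))"
      "subtree_at t (v @ [False]) = subtree_at (subtree_at t v) [False]"
      using pos_append[OF vp(1), of "[False]"] by auto
    have w: "v @ [False] \<in> positions t" "subtree_at t (v @ [False]) = Leaf a"
      using pa lr a by auto
    have "v @ [False] \<noteq> []" by simp
    then have "v @ [False] \<in> uverts t" using w(1) Node by simp
    moreover have "{v, v @ [False]} \<in> uedges t" unfolding Node
      by (rule uedge_intro[OF refl vp(2)]) (use w(1) Node in simp)
    moreover have "ulabel t (v @ [False]) \<noteq> None" using w unfolding ulabel_def by simp
    ultimately show "\<exists>w\<in>uverts t. {v, w} \<in> uedges t \<and> ulabel t w \<noteq> None" by blast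
  qed
qed

lemma comb_facts:
  assumes "xs \<noteq> []"
  shows "uidentical (rc xs) (lcomb xs)" "uidentical (lcomb xs) (rc xs)"
    "ucaterpillar (rc xs)" "ucaterpillar (lcomb xs)"
proof -
  show a: "uidentical (lcomb xs) (rc xs)" using lcomb_rc[OF assms] .
  show b: "uidentical (rc xs) (lcomb xs)" using uid_sym[OF a] .
  show c: "ucaterpillar (rc xs)" using cat_LL[OF LL_rc] .
  show "ucaterpillar (lcomb xs)" using cat_inv[OF b c] .
qed



lemma cross:
  assumes d1: "distinct (Seq t1)" and d2: "distinct (Seq t2)"
    and Z1: "set (Seq t1) = Z" and Z2: "set (Seq t2) = Z"
    and t2: "t2 = Node l2 r2" and q1: "q1 \<in> positions t1"
    and NP: "\<forall>Y x. pairP Z t1 t2 Y x \<longrightarrow> card Y < k"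
    and kc: "k \<le> card (set (Seq (subtree_at t1 q1)))"
  shows "(\<exists>x\<in>set (Seq (subtree_at t1 q1)). x \<in> set (Seq l2)) \<and> (\<exists>x\<in>set (Seq (subtree_at t1 q1)). x \<notin> set (Seq l2))"
proof (rule ccontr)
  let ?Y = "set (Seq (subtree_at t1 q1))"
  assume nc: "\<not> ?thesis"
  have dl: "set (Seq l2) \<inter> set (Seq r2) = {}" using d2 t2 by simp
  have YZ: "?Y \<subseteq> Z" using sub_Seq_subset[OF q1] Z1 by simp
  have Zu: "Z = set (Seq l2) \<union> set (Seq r2)" using Z2 t2 by simp
  have "\<exists>q2 x. q2 \<in> positions t2 \<and> ?Y \<subseteq> set (Seq (subtree_at t2 q2)) \<and> x \<in> Z \<and> x \<notin> set (Seq (subtree_at t2 q2))"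
  proof (cases "?Y \<subseteq> set (Seq l2)")
    case True
    obtain x where x: "x \<in> set (Seq r2)" using Seq_ne[of r2] by (cases "Seq r2") auto
    have "x \<notin> set (Seq l2)" using x dl by blast
    moreover have "x \<in> Z" using x Zu by blast
    moreover have "[False] \<in> positions t2" "subtree_at t2 [False] = l2" using t2 by simp_all
    ultimately show ?thesis using True by metis
  next
    case False
    then have "?Y \<subseteq> set (Seq r2)" using nc YZ Zu by blast
    moreover obtain x where x: "x \<in> set (Seq l2)" using Seq_ne[of l2] by (cases "Seq l2") auto
    moreover have "x \<notin> set (Seq r2)" using x dl by blast
    moreover have "x \<in> Z" using x Zu by blast
    moreover have "[True] \<in> positions t2" "subtree_at t2 [True] = r2" using t2 by simp_all
    ultimately show ?thesis by metis
  qed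
  then obtain q2 x where q2: "q2 \<in> positions t2" "?Y \<subseteq> set (Seq (subtree_at t2 q2))" "x \<in> Z"
    "x \<notin> set (Seq (subtree_at t2 q2))" by blast
  have "pairP Z t1 t2 ?Y x" using pair_gen[OF d1 d2 Z1 Z2 q1 q2(1) q2(2) q2(3) q2(4)] .
  then have "card ?Y < k" using NP by blast
  then show False using kc by simp
qed

lemma idx_in_sublist:
  assumes "s = p @ w @ t" "distinct s" "j < length s" "s ! j \<in> set w"
  shows "length p \<le> j \<and> j < length p + length w"
proof -
  obtain i where i: "i < length w" "w ! i = s ! j" using assms(4) by (metis in_set_conv_nth)
  have "s ! (length p + i) = w ! i" using assms(1) i(1) by (simp add: nth_append)
  moreover have "length p + i < length s" using assms(1) i(1) by simp
  ultimately have "length p + i = j" using assms(2,3) i(2) nth_eq_iff_index_eq by metis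
  then show ?thesis using i(1) by simp
qed

lemma sep_lemma:
  fixes s :: "'a list"
  assumes ds: "distinct s" and w: "sublist w s" and cw: "card (set w) < k" and k: "k \<ge> 2"
    and Jb: "\<forall>i<q. a + i * (k - 1) < length s"
  shows "card ((\<lambda>j. s ! j) ` ((\<lambda>i. a + i * (k - 1)) ` {..<q}) \<inter> set w) \<le> 1"
proof -
  obtain p t where pt: "s = p @ w @ t" using w unfolding sublist_def by blast
  have dw: "distinct w" using ds pt by simp
  have lw: "length w < k" using cw distinct_card[OF dw] by simp
  let ?A = "(\<lambda>j. s ! j) ` ((\<lambda>i. a + i * (k - 1)) ` {..<q}) \<inter> set w"
  have "\<forall>x\<in>?A. \<forall>y\<in>?A. x = y"
  proof (intro ballI)
    fix x y assume x: "x \<in> ?A" and y: "y \<in> ?A"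
    obtain i where i: "i < q" "x = s ! (a + i * (k - 1))" "x \<in> set w" using x by auto
    obtain i' where i': "i' < q" "y = s ! (a + i' * (k - 1))" "y \<in> set w" using y by auto
    have b1: "length p \<le> a + i * (k - 1) \<and> a + i * (k - 1) < length p + length w"
      using idx_in_sublist[OF pt ds] Jb i by blast
    have b2: "length p \<le> a + i' * (k - 1) \<and> a + i' * (k - 1) < length p + length w"
      using idx_in_sublist[OF pt ds] Jb i' by blast
    have "i = i'"
    proof (rule ccontr)
      assume "i \<noteq> i'"
      then have "i < i' \<or> i' < i" by arith
      then show False
      proof
        assume "i < i'"
        then have "i * (k - 1) + (k - 1) \<le> i' * (k - 1)"
          by (metis Suc_leI add.commute mult_Suc mult_le_mono1)
        then show False using b1 b2 lw by linarith
      next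
        assume "i' < i"
        then have "i' * (k - 1) + (k - 1) \<le> i * (k - 1)"
          by (metis Suc_leI add.commute mult_Suc mult_le_mono1)
        then show False using b1 b2 lw by linarith
      qed
    qed
    then show "x = y" using i i' by simp
  qed
  moreover have "finite ?A" by simp
  ultimately show ?thesis using card_le_Suc0_iff_eq by (metis One_nat_def)
qed



lemma core:
  fixes T1 T2 :: "'a btree" and L :: real and k :: nat
  assumes T1: "T1 = Node l1 r1" and T2: "T2 = Node l2 r2"
    and s1: "Seq T1 = s" and s2: "Seq T2 = s" and ds: "distinct s" and Zs: "set s = Z"
    and NP: "\<forall>Y x. pairP Z T1 T2 Y x \<longrightarrow> card Y < k"
    and sub: "set (Seq l1) \<subseteq> set (Seq l2)"
    and L2: "L \<ge> 2" and kL: "real k < real (length s) / (2 * L) + 1"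
  shows "\<exists>A xs. A \<subseteq> Z \<and> real (card A) \<ge> L \<and> xs \<noteq> [] \<and> restr T1 A = rc xs \<and> restr T2 A = lcomb xs"
proof -
  have d1: "distinct (Seq T1)" and d2: "distinct (Seq T2)" using ds s1 s2 by simp_all
  have Z1: "set (Seq T1) = Z" and Z2: "set (Seq T2) = Z" using Zs s1 s2 by simp_all
  have NP': "\<forall>Y x. pairP Z T2 T1 Y x \<longrightarrow> card Y < k" using NP pairP_sym by metis
  have sA: "s = Seq l1 @ Seq r1" using s1 T1 by simp
  have sB: "s = Seq l2 @ Seq r2" using s2 T2 by simp
  have dl1: "distinct (Seq l1)" "distinct (Seq r1)" "set (Seq l1) \<inter> set (Seq r1) = {}" using ds sA by simp_all
  have dl2: "distinct (Seq l2)" "distinct (Seq r2)" "set (Seq l2) \<inter> set (Seq r2) = {}" using ds sB by simp_all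
  define m where "m = length s"
  define a where "a = length (Seq l1)"
  define b where "b = length (Seq l2)"
  define c where "c = length (Seq r2)"
  have mb: "m = b + c" unfolding m_def b_def c_def using sB by simp
  have ma: "m = a + length (Seq r1)" unfolding m_def a_def using sA by simp
  have l1k: "a < k"
  proof (rule ccontr)
    assume "\<not> a < k"
    then have "k \<le> card (set (Seq (subtree_at T1 [False])))" using T1 distinct_card[OF dl1(1)] a_def by simp
    from cross[OF d1 d2 Z1 Z2 T2 _ NP this] have "\<exists>x\<in>set (Seq l1). x \<notin> set (Seq l2)" using T1 by simp
    then show False using sub by blast
  qed
  have r2k: "c < k"
  proof (rule ccontr)
    assume "\<not> c < k"
    then have "k \<le> card (set (Seq (subtree_at T2 [True])))" using T2 distinct_card[OF dl2(2)] c_def by simp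
    from cross[OF d2 d1 Z2 Z1 T1 _ NP' this] have "\<exists>x\<in>set (Seq r2). x \<in> set (Seq l1)" using T2 by simp
    then show False using sub dl2(3) by blast
  qed
  have a1: "a \<ge> 1" unfolding a_def using Seq_ne[of l1] by (cases "Seq l1") auto
  have k2: "k \<ge> 2" using l1k a1 by simp
  have ab: "a \<le> b" unfolding a_def b_def
    using card_mono[OF finite_set sub] distinct_card[OF dl1(1)] distinct_card[OF dl2(1)] by simp
  define K where "K = k - 1"
  have K1: "K \<ge> 1" unfolding K_def using k2 by simp
  define D where "D = b - a"
  define q where "q = (D + K - 1) div K"
  have qK1: "q * K \<le> D + K - 1" unfolding q_def by simp
  have qK2: "D \<le> q * K"
  proof -
    have "D + K - 1 = q * K + (D + K - 1) mod K" unfolding q_def by simp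
    moreover have "(D + K - 1) mod K < K" using K1 by simp
    ultimately show ?thesis by linarith
  qed
  have Jb: "\<forall>i<q. a + i * K < b"
  proof (intro allI impI)
    fix i assume "i < q"
    then have "i * K + K \<le> q * K" by (metis Suc_leI add.commute mult_Suc mult_le_mono1)
    then show "a + i * K < b" using qK1 K1 ab unfolding D_def by linarith
  qed
  have bm: "b \<le> m" using mb by simp
  define J where "J = (\<lambda>i. a + i * K) ` {..<q}"
  define A where "A = (\<lambda>j. s ! j) ` J"
  have Jab: "\<forall>j\<in>J. a \<le> j \<and> j < b" unfolding J_def using Jb by auto
  have Ar1: "A \<subseteq> set (Seq r1)"
  proof
    fix x assume "x \<in> A"
    then obtain j where j: "j \<in> J" "x = s ! j" unfolding A_def by blast
    have "a \<le> j" "j < m" using Jab j(1) bm by auto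
    then have "s ! j = Seq r1 ! (j - a)" "j - a < length (Seq r1)" using sA ma unfolding a_def
      by (simp_all add: nth_append)
    then show "x \<in> set (Seq r1)" using j(2) by simp
  qed
  have Al2: "A \<subseteq> set (Seq l2)"
  proof
    fix x assume "x \<in> A"
    then obtain j where j: "j \<in> J" "x = s ! j" unfolding A_def by blast
    have "j < b" using Jab j(1) by auto
    then have "s ! j = Seq l2 ! j" "j < length (Seq l2)" using sB unfolding b_def
      by (simp_all add: nth_append)
    then show "x \<in> set (Seq l2)" using j(2) by simp
  qed
  have cardA: "card A = q"
  proof -
    have "inj_on (\<lambda>i. a + i * K) {..<q}" using K1 by (auto simp: inj_on_def)
    then have cJ: "card J = q" unfolding J_def by (simp add: card_image)
    have "inj_on (\<lambda>j. s ! j) J"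
    proof (rule inj_onI)
      fix x y assume "x \<in> J" "y \<in> J" "s ! x = s ! y"
      moreover have "x < length s" "y < length s" using Jab bm calculation(1,2) unfolding m_def by fastforce+
      ultimately show "x = y" using ds nth_eq_iff_index_eq by metis
    qed
    then show ?thesis unfolding A_def using cJ by (simp add: card_image)
  qed
  have Lpos: "L > 0" using L2 by simp
  have qL: "real q \<ge> L"
  proof -
    have "real k - 1 < real m / (2 * L)" using kL unfolding m_def by simp
    then have "real K < real m / (2 * L)" unfolding K_def using k2 by (simp add: of_nat_diff)
    then have i1: "2 * L * real K < real m" using Lpos by (simp add: field_simps)
    have "m \<le> q * K + 2 * K" using qK2 mb l1k r2k unfolding D_def K_def by linarith
    then have "real m \<le> real q * real K + 2 * real K" by (metis of_nat_add of_nat_le_iff of_nat_mult of_nat_numeral)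
    then have "2 * L * real K < (real q + 2) * real K" using i1 by (simp add: algebra_simps)
    then have "2 * L < real q + 2" using K1 by (simp add: mult_less_cancel_right)
    then show ?thesis using L2 by simp
  qed
  have q1: "q \<ge> 1" using qL L2 by simp
  have Ane: "A \<noteq> {}" using cardA q1 by auto
  have AZ: "A \<subseteq> Z" using Ar1 Zs sA by auto
  have JbK: "\<forall>i<q. a + i * (k - 1) < length s" using Jb bm unfolding K_def m_def by fastforce
  have sepS: "card (A \<inter> set w) \<le> 1" if "sublist w s" "card (set w) < k" for w
    using sep_lemma[OF ds that k2 JbK] unfolding A_def J_def K_def .
  have pcB: "pc (\<lambda>x. x \<in> set (Seq l2)) s" unfolding pc_def using sB dl2(3)
    by (intro exI[of _ "Seq l2"] exI[of _ "Seq r2"]) auto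
  have pcr1: "pc (\<lambda>x. x \<in> set (Seq l2)) (Seq r1)" using pc_app(2)[of _ "Seq l1" "Seq r1"] pcB sA by simp
  have cr1: "\<forall>v\<in>subtrees r1. k \<le> card (set (Seq v)) \<longrightarrow>
      (\<exists>x\<in>set (Seq v). x \<in> set (Seq l2)) \<and> (\<exists>x\<in>set (Seq v). \<not> x \<in> set (Seq l2))"
  proof (intro ballI impI)
    fix v assume v: "v \<in> subtrees r1" and kv: "k \<le> card (set (Seq v))"
    obtain q' where q': "q' \<in> positions r1" "v = subtree_at r1 q'" using subtrees_pos[OF v] by blast
    have p1: "True # q' \<in> positions T1" "subtree_at T1 (True # q') = v" using q' T1 by simp_all
    show "(\<exists>x\<in>set (Seq v). x \<in> set (Seq l2)) \<and> (\<exists>x\<in>set (Seq v). \<not> x \<in> set (Seq l2))"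
      using cross[OF d1 d2 Z1 Z2 T2 p1(1) NP] kv p1(2) by simp
  qed
  have sub_s1: "sublist (Seq v) s" if "v \<in> subtrees r1" for v
  proof -
    have "sublist (Seq v) (Seq r1)" using subtrees_sublist[OF that] .
    moreover have "sublist (Seq r1) s" using sA by simp
    ultimately show ?thesis using sublist_order.order.trans by blast
  qed
  have sep1: "\<forall>v\<in>subtrees r1. card (set (Seq v)) < k \<longrightarrow> card (A \<inter> set (Seq v)) \<le> 1"
    using sepS sub_s1 by blast
  have AP: "\<forall>x\<in>A. x \<in> set (Seq l2)" using Al2 by blast
  have Ar1ne: "A \<inter> set (Seq r1) \<noteq> {}" using Ar1 Ane by blast
  have R1: "restrict A r1 = Some (rc (filter (\<lambda>x. x \<in> A) (Seq r1)))"
    using combR[OF dl1(2) pcr1 cr1 sep1 AP Ar1ne] .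
  have Al1: "A \<inter> set (Seq l1) = {}" using Ar1 dl1(3) by blast
  have N1: "restrict A l1 = None" using Al1 restrict_None by blast
  have f1: "filter (\<lambda>x. x \<in> A) (Seq l1) = []" using Al1 by (auto simp: filter_empty_conv)
  define xs where "xs = filter (\<lambda>x. x \<in> A) s"
  have xs1: "xs = filter (\<lambda>x. x \<in> A) (Seq r1)" unfolding xs_def using sA f1 by simp
  have rT1: "restr T1 A = rc xs" unfolding restr_def T1 using N1 R1 xs1 by simp
  have pcA: "pc (\<lambda>x. x \<in> set (Seq l1)) s" unfolding pc_def using sA dl1(3)
    by (intro exI[of _ "Seq l1"] exI[of _ "Seq r1"]) auto
  have pcl2: "pc (\<lambda>x. x \<in> set (Seq l1)) (Seq l2)" using pc_app(1)[of _ "Seq l2" "Seq r2"] pcA sB by simp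
  have cl2: "\<forall>v\<in>subtrees l2. k \<le> card (set (Seq v)) \<longrightarrow>
      (\<exists>x\<in>set (Seq v). x \<in> set (Seq l1)) \<and> (\<exists>x\<in>set (Seq v). \<not> x \<in> set (Seq l1))"
  proof (intro ballI impI)
    fix v assume v: "v \<in> subtrees l2" and kv: "k \<le> card (set (Seq v))"
    obtain q' where q': "q' \<in> positions l2" "v = subtree_at l2 q'" using subtrees_pos[OF v] by blast
    have p1: "False # q' \<in> positions T2" "subtree_at T2 (False # q') = v" using q' T2 by simp_all
    show "(\<exists>x\<in>set (Seq v). x \<in> set (Seq l1)) \<and> (\<exists>x\<in>set (Seq v). \<not> x \<in> set (Seq l1))"
      using cross[OF d2 d1 Z2 Z1 T1 p1(1) NP'] kv p1(2) by simp
  qed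
  have sub_s2: "sublist (Seq v) s" if "v \<in> subtrees l2" for v
  proof -
    have "sublist (Seq v) (Seq l2)" using subtrees_sublist[OF that] .
    moreover have "sublist (Seq l2) s" using sB by simp
    ultimately show ?thesis using sublist_order.order.trans by blast
  qed
  have sep2: "\<forall>v\<in>subtrees l2. card (set (Seq v)) < k \<longrightarrow> card (A \<inter> set (Seq v)) \<le> 1"
    using sepS sub_s2 by blast
  have AP': "\<forall>x\<in>A. \<not> x \<in> set (Seq l1)" using Al1 by blast
  have Al2ne: "A \<inter> set (Seq l2) \<noteq> {}" using Al2 Ane by blast
  have R2: "restrict A l2 = Some (lcomb (filter (\<lambda>x. x \<in> A) (Seq l2)))"
    using combL[OF dl2(1) pcl2 cl2 sep2 AP' Al2ne] .
  have Ar2: "A \<inter> set (Seq r2) = {}" using Al2 dl2(3) by blast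
  have N2: "restrict A r2 = None" using Ar2 restrict_None by blast
  have f2: "filter (\<lambda>x. x \<in> A) (Seq r2) = []" using Ar2 by (auto simp: filter_empty_conv)
  have xs2: "xs = filter (\<lambda>x. x \<in> A) (Seq l2)" unfolding xs_def using sB f2 by simp
  have rT2: "restr T2 A = lcomb xs" unfolding restr_def T2 using N2 R2 xs2 by simp
  have xsne: "xs \<noteq> []" unfolding xs_def using Ane AZ Zs by (auto simp: filter_empty_conv)
  show ?thesis using AZ qL cardA xsne rT1 rT2 by metis
qed



lemma final_comb:
  assumes "A \<subseteq> Z" "L \<le> real (card A)" "xs \<noteq> []"
    "(restr T1 A = rc xs \<and> restr T2 A = lcomb xs) \<or> (restr T1 A = lcomb xs \<and> restr T2 A = rc xs)"
  shows "\<exists>A. A \<subseteq> Z \<and> real (card A) \<ge> L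
            \<and> uidentical (restr T1 A) (restr T2 A)
            \<and> ucaterpillar (restr T1 A) \<and> ucaterpillar (restr T2 A)"
  using assms comb_facts[OF assms(3)] by metis

theorem corollary1:
  fixes n :: nat and C :: real and Z :: "'a set" and T1 T2 :: "'a btree"
  assumes "n \<ge> 2" and "C \<ge> 4" and "finite Z" and "card Z \<ge> 2"
    and "rooted_Ztree Z T1" and "rooted_Ztree Z T2"
    and "Seq T1 = Seq T2"
  shows "(\<exists>x Y. x \<in> Z \<and> Y \<noteq> {} \<and> Y \<subset> Z
            \<and> sdesc T1 (lca T1 Y) (lca T1 (Y \<union> {x}))
            \<and> sdesc T2 (lca T2 Y) (lca T2 (Y \<union> {x}))
            \<and> real (card Y) \<ge> real (card Z) / C)
       \<or> (\<exists>x Y. good_pair n Z T1 T2 x Y)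
       \<or> (\<exists>A. A \<subseteq> Z \<and> real (card A) \<ge> log 2 (real n)
            \<and> uidentical (restr T1 A) (restr T2 A)
            \<and> ucaterpillar (restr T1 A) \<and> ucaterpillar (restr T2 A))"
proof -
  obtain l1 r1 where T1: "T1 = Node l1 r1" using assms(5) unfolding rooted_Ztree_def by blast
  obtain l2 r2 where T2: "T2 = Node l2 r2" using assms(6) unfolding rooted_Ztree_def by blast
  define s where "s = Seq T1"
  have s1: "Seq T1 = s" and s2: "Seq T2 = s" using assms(7) s_def by simp_all
  have ds: "distinct s" and Zs: "set s = Z" using assms(5) s1 unfolding rooted_Ztree_def by auto
  have mZ: "card Z = length s" using distinct_card[OF ds] Zs by simp
  define L where "L = log 2 (real n)"
  have L1: "L \<ge> 1" unfolding L_def using assms(1) by simp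
  define k where "k = nat \<lceil>real (card Z) / (2 * L)\<rceil>"
  have kge: "real k \<ge> real (card Z) / (2 * L)" unfolding k_def by (rule real_nat_ceiling_ge)
  have klt: "real k < real (card Z) / (2 * L) + 1"
  proof -
    have nn: "real (card Z) / (2 * L) \<ge> 0" using L1 by simp
    have "real k = of_int \<lceil>real (card Z) / (2 * L)\<rceil>" unfolding k_def using nn by simp
    then show ?thesis using ceiling_correct[of "real (card Z) / (2 * L)"] by linarith
  qed
  show ?thesis
  proof (cases "\<exists>Y x. pairP Z T1 T2 Y x \<and> k \<le> card Y")
    case True
    then obtain Y x where Yx: "pairP Z T1 T2 Y x" "k \<le> card Y" by blast
    have "real (card Y) \<ge> real (card Z) / (2 * log 2 (real n))" using Yx(2) kge unfolding L_def by linarith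
    then have "good_pair n Z T1 T2 x Y" using Yx(1) unfolding good_pair_def pairP_def by blast
    then show ?thesis by blast
  next
    case False
    then have NP: "\<forall>Y x. pairP Z T1 T2 Y x \<longrightarrow> card Y < k" by (meson not_le)
    have NP': "\<forall>Y x. pairP Z T2 T1 Y x \<longrightarrow> card Y < k" using NP pairP_sym by metis
    have key: "\<exists>A xs. A \<subseteq> Z \<and> L \<le> real (card A) \<and> xs \<noteq> [] \<and>
      ((restr T1 A = rc xs \<and> restr T2 A = lcomb xs) \<or> (restr T1 A = lcomb xs \<and> restr T2 A = rc xs))"
    proof (cases "L < 2")
      case True
      obtain x0 x1 rest where s3: "s = x0 # x1 # rest" using mZ assms(4)
        by (cases s; cases "tl s") auto
      define A where "A = {x0, x1}"
      have x01: "x0 \<noteq> x1" "x0 \<notin> set rest" "x1 \<notin> set rest" using ds s3 by auto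
      have cA: "card A = 2" unfolding A_def using x01 by simp
      have AZ: "A \<subseteq> Z" unfolding A_def using Zs s3 by auto
      have fl: "filter (\<lambda>x. x \<in> A) s = [x0, x1]"
      proof -
        have "filter (\<lambda>x. x \<in> A) rest = []" unfolding A_def using x01 by (auto simp: filter_empty_conv)
        then show ?thesis unfolding A_def s3 by simp
      qed
      have res: "restr t A = Node (Leaf x0) (Leaf x1)" if "Seq t = s" for t
      proof -
        have "A \<inter> set (Seq t) \<noteq> {}" using that s3 unfolding A_def by simp
        then obtain t' where t': "restrict A t = Some t'" using restrict_None[of A t] by (cases "restrict A t") auto
        have "Seq t' = [x0, x1]" using restrict_Seq[OF t'] fl that by simp
        then have "t' = Node (Leaf x0) (Leaf x1)" by (rule Seq_two)
        then show ?thesis unfolding restr_def using t' by simp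
      qed
      have e1: "rc [x0, x1] = Node (Leaf x0) (Leaf x1)" by simp
      have e2: "lcomb [x0, x1] = Node (Leaf x0) (Leaf x1)" by (simp add: lcomb_def)
      have "restr T1 A = rc [x0, x1]" "restr T2 A = lcomb [x0, x1]" using res[OF s1] res[OF s2] e1 e2 by simp_all
      moreover have "L \<le> real (card A)" using True cA by simp
      ultimately show ?thesis using AZ by blast
    next
      case False
      then have L2: "L \<ge> 2" by simp
      have kL: "real k < real (length s) / (2 * L) + 1" using klt mZ by simp
      have "Seq l1 @ Seq r1 = Seq l2 @ Seq r2" using s1 s2 T1 T2 by simp
      then obtain us where "(Seq l1 = Seq l2 @ us) \<or> (Seq l2 = Seq l1 @ us)"
        by (auto simp: append_eq_append_conv2) (metis)
      then have "set (Seq l1) \<subseteq> set (Seq l2) \<or> set (Seq l2) \<subseteq> set (Seq l1)" by auto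
      then show ?thesis
      proof
        assume sub: "set (Seq l1) \<subseteq> set (Seq l2)"
        show ?thesis using core[OF T1 T2 s1 s2 ds Zs NP sub L2 kL] by blast
      next
        assume sub: "set (Seq l2) \<subseteq> set (Seq l1)"
        show ?thesis using core[OF T2 T1 s2 s1 ds Zs NP' sub L2 kL] by blast
      qed
    qed
    then obtain A xs where Axs: "A \<subseteq> Z" "L \<le> real (card A)" "xs \<noteq> []"
      "(restr T1 A = rc xs \<and> restr T2 A = lcomb xs) \<or> (restr T1 A = lcomb xs \<and> restr T2 A = rc xs)"
      by blast
    have "\<exists>A. A \<subseteq> Z \<and> real (card A) \<ge> L
            \<and> uidentical (restr T1 A) (restr T2 A)
            \<and> ucaterpillar (restr T1 A) \<and> ucaterpillar (restr T2 A)"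
      by (rule final_comb[OF Axs])
    then show ?thesis unfolding L_def by blast
  qed
qed


end
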